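(* Let $F$ be a MIMO LTI system with $m$ inputs and $p$ outputs and $\|F\|_2<\infty$; let $k_1,\dots,k_m>0$, $K=\mathrm{diag}(k_1,\dots,k_m)$, $\epsilon,\delta>0$. For every stable $m\times m$ LTI system $G$ and every LTI system $L$ with $L(z)G(z)=I_m$, $$\kappa_{\delta,\epsilon}^2\,\|GK\|_2^2\,\|FL\|_2^2\ \ge\ \kappa_{\delta,\epsilon}^2\Big(\frac1{2\pi}\int_{-\pi}^{\pi}\|F(e^{j\omega})K\|_*\,d\omega\Big)^2,$$ where $\|M\|_*$ denotes the nuclear norm (sum of singular values) of a matrix $M$.
   Context: All systems are causal LTI with real coefficients; $\|\cdot\|_2$ for a system is the $\mathcal H_2$ norm, $\|G\|_2^2=\frac1{2\pi}\int_{-\pi}^{\pi}\mathrm{Tr}(G(e^{j\omega})^*G(e^{j\omega}))d\omega$. For $\epsilon,\delta>0$, $\mathcal Q(x)=\frac1{\sqrt{2\pi}}\int_x^\infty e^{-s^2/2}ds$, $K_\delta=\mathcal Q^{-1}(\delta)$, $\kappa_{\delta,\epsilon}=\frac1{2\epsilon}(K_\delta+\sqrt{K_\delta^2+2\epsilon})$. (The left-hand side is a lower bound on the mean-squared error of any zero-forcing mechanism $FL(Gu+w)$ whose noise variance is calibrated to the sensitivity of $G$, since that sensitivity is at least $\|GK\|_2$.) *)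

theory Defs
  imports "HOL-Analysis.Analysis"
begin

definition Qfun :: "real \<Rightarrow> real" where
  "Qfun x = (1 / sqrt (2 * pi)) * (LBINT s:{x..}. exp (- (s\<^sup>2) / 2))"

definition K_delta :: "real \<Rightarrow> real" where
  "K_delta \<delta> = inv Qfun \<delta>"

definition kappa :: "real \<Rightarrow> real \<Rightarrow> real" where
  "kappa \<delta> \<epsilon> = (1 / (2 * \<epsilon>)) * (K_delta \<delta> + sqrt ((K_delta \<delta>)\<^sup>2 + 2 * \<epsilon>))"

definition adj :: "complex^'n^'m \<Rightarrow> complex^'m^'n" where
  "adj M = (\<chi> i j. cnj (M $ j $ i))"

definition psd :: "complex^'n^'n \<Rightarrow> bool" where
  "psd S \<longleftrightarrow> adj S = S \<and> (\<forall>x. 0 \<le> Re (\<Sum>i\<in>UNIV. cnj (x $ i) * (S *v x) $ i))"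

text \<open>Nuclear norm: trace of the PSD square root of M^* M, i.e. the sum of the
  singular values of M.\<close>
definition nuclear_norm :: "complex^'n^'m \<Rightarrow> real" where
  "nuclear_norm M = Re (trace (THE S. psd S \<and> S ** S = adj M ** M))"

definition diagm :: "real^'m \<Rightarrow> complex^'m^'m" where
  "diagm k = (\<chi> i j. if i = j then complex_of_real (k $ i) else 0)"

text \<open>An LTI system is represented by its frequency response
  \<omega> \<mapsto> G(e^{j\<omega>}).  Squared H2 norm (possibly infinite).\<close>
definition h2sq :: "(real \<Rightarrow> complex^'n^'m) \<Rightarrow> ennreal" where
  "h2sq G = ennreal (1 / (2 * pi)) *
     (\<integral>\<^sup>+ \<omega>\<in>{-pi..pi}. ennreal (Re (trace (adj (G \<omega>) ** G \<omega>))) \<partial>lborel)"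

end

theory Submission
  imports Defs
begin

definition cinner :: "complex^'n \<Rightarrow> complex^'n \<Rightarrow> complex" where
  "cinner x y = (\<Sum>i\<in>UNIV. cnj (x$i) * y$i)"

lemma cinner_add_right: "cinner x (y + z) = cinner x y + cinner x z"
  by (simp add: cinner_def distrib_left sum.distrib)
lemma cinner_add_left: "cinner (x + y) z = cinner x z + cinner y z"
  by (simp add: cinner_def distrib_right sum.distrib)
lemma cinner_diff_right: "cinner x (y - z) = cinner x y - cinner x z"
  by (simp add: cinner_def right_diff_distrib sum_subtractf)
lemma cinner_diff_left: "cinner (x - y) z = cinner x z - cinner y z"
  by (simp add: cinner_def left_diff_distrib sum_subtractf)
lemma cinner_scale_right: "cinner x (c *s y) = c * cinner x y"
  by (simp add: cinner_def sum_distrib_left algebra_simps)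
lemma cinner_scale_left: "cinner (c *s x) y = cnj c * cinner x y"
  by (simp add: cinner_def sum_distrib_left algebra_simps)
lemma cinner_zero_right[simp]: "cinner x 0 = 0" by (simp add: cinner_def)
lemma cinner_zero_left[simp]: "cinner 0 x = 0" by (simp add: cinner_def)
lemma cinner_sum_right: "cinner x (\<Sum>v\<in>V. f v) = (\<Sum>v\<in>V. cinner x (f v))"
  by (induct V rule: infinite_finite_induct) (auto simp: cinner_add_right)
lemma cinner_sum_left: "cinner (\<Sum>v\<in>V. f v) x = (\<Sum>v\<in>V. cinner (f v) x)"
  by (induct V rule: infinite_finite_induct) (auto simp: cinner_add_left)
lemma cinner_commute: "cinner y x = cnj (cinner x y)"
  by (simp add: cinner_def mult.commute)

lemma inner_cinner: "inner x y = Re (cinner x y)"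
  by (simp add: cinner_def inner_vec_def inner_complex_def Re_sum)

lemma cnj_mult_self: "cnj z * z = complex_of_real ((cmod z)\<^sup>2)"
proof -
  have "complex_of_real ((cmod z)\<^sup>2) = z * cnj z" using complex_norm_square[of z] by simp
  thus ?thesis by (simp only: mult.commute)
qed

lemma cinner_self: "cinner x x = complex_of_real ((norm x)\<^sup>2)"
proof -
  have "cinner x x = (\<Sum>i\<in>UNIV. complex_of_real ((cmod (x$i))\<^sup>2))"
    unfolding cinner_def by (rule sum.cong) (simp_all only: cnj_mult_self)
  also have "\<dots> = complex_of_real ((norm x)\<^sup>2)"
    by (simp add: norm_vec_def L2_set_def sum_nonneg)
  finally show ?thesis .
qed

lemma Re_cinner_self: "Re (cinner x x) = (norm x)\<^sup>2"
  by (simp add: cinner_self)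

lemma cinner_adj: "cinner x (A *v y) = cinner (adj A *v x) y"
proof -
  have "cinner x (A *v y) = (\<Sum>i\<in>UNIV. \<Sum>j\<in>UNIV. cnj (x$i) * A$i$j * y$j)"
    unfolding cinner_def matrix_vector_mult_def by (simp add: sum_distrib_left mult.assoc)
  also have "\<dots> = (\<Sum>j\<in>UNIV. \<Sum>i\<in>UNIV. cnj (x$i) * A$i$j * y$j)" by (rule sum.swap)
  also have "\<dots> = cinner (adj A *v x) y"
    unfolding cinner_def matrix_vector_mult_def adj_def
    by (simp add: sum_distrib_left sum_distrib_right cnj_sum mult_ac)
  finally show ?thesis .
qed

lemma adj_adj[simp]: "adj (adj A) = A" by (simp add: adj_def vec_eq_iff)

lemma adj_mult: "adj (A ** B) = adj B ** adj A"
  by (simp add: adj_def matrix_matrix_mult_def vec_eq_iff mult.commute)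

lemma mv_scale: "(A::complex^'n^'m) *v (c *s x) = c *s (A *v x)"
  unfolding matrix_vector_mult_def vec_eq_iff by (auto simp: sum_distrib_left mult.left_commute intro!: sum.cong)

lemma mv_sum: "A *v (\<Sum>v\<in>V. f v) = (\<Sum>v\<in>V. A *v f v)"
  by (induct V rule: infinite_finite_induct) (auto simp: matrix_vector_right_distrib)

lemma scale_sum: "(c::complex) *s (\<Sum>v\<in>V. f v) = (\<Sum>v\<in>V. c *s f v)"
  unfolding vec_eq_iff by (auto simp: sum_component sum_distrib_left intro!: sum.cong)


definition onf :: "(complex^'n) set \<Rightarrow> bool" where
  "onf V \<longleftrightarrow> finite V \<and> (\<forall>v\<in>V. cinner v v = 1) \<and> (\<forall>v\<in>V. \<forall>w\<in>V. v \<noteq> w \<longrightarrow> cinner v w = 0)"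

lemma onf_card: fixes V :: "(complex^'n) set" assumes "onf V" shows "card V \<le> DIM(complex^'n)"
proof -
  have "pairwise orthogonal V"
    using assms by (auto simp: onf_def pairwise_def orthogonal_def inner_cinner)
  moreover have "(0::complex^'n) \<notin> V" using assms by (auto simp: onf_def)
  ultimately have "independent V" by (rule pairwise_orthogonal_independent)
  thus ?thesis using independent_bound by blast
qed

lemma herm_cinner: "adj H = H \<Longrightarrow> cinner x (H *v y) = cinner (H *v x) y"
  by (metis cinner_adj)

lemma cinner_of_real_scale_left: "cinner (complex_of_real t *s x) y = complex_of_real t * cinner x y"
  by (simp add: cinner_scale_left)

lemma cont_cinner: "continuous_on S (\<lambda>x. cinner v x)"
  unfolding cinner_def by (intro continuous_intros)

lemma cont_q: "continuous_on S (\<lambda>x. Re (cinner x ((H::complex^'n^'n) *v x)))"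
  unfolding cinner_def matrix_vector_mult_def by (simp, intro continuous_intros)

lemma norm_eq_Re_cinner: "norm x = sqrt (Re (cinner x x))"
  by (simp add: Re_cinner_self)

lemma quad_neg: "(b::real) \<ge> 0 \<Longrightarrow> a > 0 \<Longrightarrow> t = - a / (b + 1) \<Longrightarrow> 2 * t * a + t^2 * b < 0"
proof -
  assume b: "b \<ge> 0" and a: "a > 0" and t: "t = - a / (b + 1)"
  have tn: "t < 0" using a b t by (simp add: divide_pos_pos)
  have "b / (b + 1) \<le> 1" using b by simp
  hence "a * (b / (b + 1)) \<le> a * 1" using a by (intro mult_left_mono) auto
  moreover have "t * b = - (a * (b / (b + 1)))" using t by simp
  ultimately have "t * b \<ge> - a" by linarith
  hence "2 * a + t * b > 0" using a by simp
  hence "t * (2 * a + t * b) < 0" using tn by (simp add: mult_neg_pos)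
  thus ?thesis by (simp add: algebra_simps power2_eq_square)
qed

lemma eigen_in_perp:
  fixes H :: "complex^'n^'n"
  assumes herm: "adj H = H"
    and Vinv: "\<And>v x. v \<in> V \<Longrightarrow> cinner v x = 0 \<Longrightarrow> cinner v (H *v x) = 0"
    and y: "\<forall>v\<in>V. cinner v y = 0" "y \<noteq> 0"
  shows "\<exists>u l. (\<forall>v\<in>V. cinner v u = 0) \<and> cinner u u = 1 \<and> H *v u = complex_of_real l *s u"
proof -
  define W where "W = {x::complex^'n. \<forall>v\<in>V. cinner v x = 0}"
  define K where "K = W \<inter> sphere 0 1"
  define q where "q x = Re (cinner x (H *v x))" for x
  have Wsc: "c *s x \<in> W" if "x \<in> W" for x c using that by (auto simp: W_def cinner_scale_right)
  have Wadd: "x + z \<in> W" if "x \<in> W" "z \<in> W" for x z using that by (auto simp: W_def cinner_add_right)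
  have WH: "H *v x \<in> W" if "x \<in> W" for x using that Vinv by (auto simp: W_def)
  have "closed W" unfolding W_def
    using closed_INT[of V "\<lambda>v. {x. cinner v x = 0}"]
    by (simp add: Collect_ball_eq closed_Collect_eq cont_cinner)
  hence "compact K" unfolding K_def by (intro closed_Int_compact) auto
  define y1 where "y1 = complex_of_real (1 / norm y) *s y"
  have cs: "cinner (complex_of_real a *s x) (complex_of_real a *s x) = complex_of_real (a^2) * cinner x x" for a x
    by (simp add: cinner_scale_left cinner_scale_right power2_eq_square)
  have nscale: "norm (complex_of_real a *s x) = \<bar>a\<bar> * norm x" for a x
    by (simp add: norm_eq_Re_cinner cs real_sqrt_mult)
  have "norm y1 = 1" unfolding y1_def nscale using y by simp
  hence "y1 \<in> K" using y by (auto simp: K_def y1_def W_def cinner_scale_right)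
  hence "K \<noteq> {}" by auto
  from continuous_attains_sup[OF \<open>compact K\<close> this cont_q[of K H]]
  obtain u where uK: "u \<in> K" and umax: "\<And>z. z \<in> K \<Longrightarrow> q z \<le> q u" unfolding q_def by blast
  define lam where "lam = q u"
  have qscale: "q (complex_of_real a *s x) = a^2 * q x" for a x
    by (simp add: q_def mv_scale cinner_scale_left cinner_scale_right power2_eq_square)
  have qle: "q z \<le> lam * (norm z)^2" if "z \<in> W" for z
  proof (cases "z = 0")
    case True thus ?thesis by (simp add: q_def)
  next
    case False
    define a where "a = 1 / norm z"
    have "norm (complex_of_real a *s z) = 1" unfolding nscale a_def using False by simp
    hence "complex_of_real a *s z \<in> K" using that Wsc by (auto simp: K_def)
    hence "a^2 * q z \<le> lam" using umax qscale lam_def by metis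
    thus ?thesis using False by (simp add: a_def field_simps)
  qed
  define T where "T x = complex_of_real lam *s x - H *v x" for x
  have Tadd: "T (x + z) = T x + T z" for x z
    by (simp add: T_def matrix_vector_right_distrib vector_ssub_ldistrib algebra_simps)
  have Tsc: "T (c *s x) = c *s T x" for c x
    by (simp add: T_def mv_scale vec_eq_iff algebra_simps)
  have Therm: "cinner x (T z) = cinner (T x) z" for x z
    by (simp add: T_def cinner_diff_left cinner_diff_right cinner_scale_left cinner_scale_right herm_cinner[OF herm])
  have Rnn: "0 \<le> Re (cinner z (T z))" if "z \<in> W" for z
  proof -
    have "Re (cinner z (T z)) = lam * (norm z)^2 - q z"
      by (simp add: T_def cinner_diff_right cinner_scale_right q_def cinner_self)
    thus ?thesis using qle[OF that] by simp
  qed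
  have un: "norm u = 1" and uW: "u \<in> W" using uK by (auto simp: K_def)
  have Ru: "Re (cinner u (T u)) = 0"
    by (simp add: T_def cinner_diff_right cinner_scale_right q_def cinner_self un lam_def)
  define d where "d = T u"
  have dW: "d \<in> W" unfolding d_def T_def using uW Wsc WH
    by (auto simp: W_def cinner_diff_right cinner_scale_right)
  have expand: "Re (cinner (u + complex_of_real t *s d) (T (u + complex_of_real t *s d)))
      = 2 * t * (norm d)^2 + t^2 * Re (cinner d (T d))" for t
  proof -
    have "cinner (u + complex_of_real t *s d) (T (u + complex_of_real t *s d))
      = cinner u (T u) + complex_of_real t * cinner u (T d) + complex_of_real t * cinner d (T u)
        + complex_of_real t * complex_of_real t * cinner d (T d)"
      by (simp add: Tadd Tsc cinner_add_left cinner_add_right cinner_scale_left cinner_scale_right algebra_simps)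
    also have "cinner u (T d) = cinner d d" using Therm d_def by simp
    also have "cinner d (T u) = cinner d d" using d_def by simp
    finally show ?thesis using Ru by (simp add: cinner_self power2_eq_square)
  qed
  have "d = 0"
  proof (rule ccontr)
    assume "d \<noteq> 0"
    define a where "a = (norm d)^2"
    define b where "b = Re (cinner d (T d))"
    have a: "a > 0" using \<open>d \<noteq> 0\<close> by (simp add: a_def)
    have b: "b \<ge> 0" using Rnn[OF dW] b_def by simp
    define t where "t = - a / (b + 1)"
    have "u + complex_of_real t *s d \<in> W" using uW dW Wsc Wadd by blast
    from Rnn[OF this] expand[of t] have "0 \<le> 2 * t * a + t^2 * b" by (simp add: a_def b_def)
    moreover have "2 * t * a + t^2 * b < 0" using quad_neg[OF b a t_def] .
    ultimately show False by simp
  qed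
  hence "H *v u = complex_of_real lam *s u" by (simp add: d_def T_def)
  moreover have "cinner u u = 1" using un by (simp add: cinner_self)
  ultimately show ?thesis using uW by (auto simp: W_def)
qed


lemma onf_coeff:
  assumes "onf V" "w \<in> V"
  shows "(\<Sum>v\<in>V. c v * cinner w v) = c w"
proof -
  have "(\<Sum>v\<in>V. c v * cinner w v) = (\<Sum>v\<in>V. if v = w then c v else 0)"
    using assms by (intro sum.cong) (auto simp: onf_def)
  also have "\<dots> = c w" using assms by (simp add: onf_def)
  finally show ?thesis .
qed

lemma onf_cinner_expansion:
  assumes "onf V" "w \<in> V"
  shows "cinner w (\<Sum>v\<in>V. c v *s v) = c w"
  by (simp add: cinner_sum_right cinner_scale_right onf_coeff[OF assms])

lemma hermitian_eigenbasis:
  fixes H :: "complex^'n^'n" assumes herm: "adj H = H"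
  shows "\<exists>V lam. onf V \<and> (\<forall>v\<in>V. H *v v = complex_of_real (lam v) *s v)
     \<and> (\<forall>x. x = (\<Sum>v\<in>V. cinner v x *s v))"
proof -
  define P where "P V \<longleftrightarrow> onf V \<and> (\<forall>v\<in>V. \<exists>l::real. H *v v = complex_of_real l *s v)"
    for V :: "(complex^'n) set"
  define C where "C = card ` {V. P V}"
  have Cb: "C \<subseteq> {..DIM(complex^'n)}" using onf_card by (auto simp: C_def P_def)
  hence finC: "finite C" by (rule finite_subset) auto
  have "P {}" by (simp add: P_def onf_def)
  hence "C \<noteq> {}" by (auto simp: C_def)
  have "Max C \<in> C" using finC \<open>C \<noteq> {}\<close> by simp
  then obtain V where PV: "P V" and cV: "card V = Max C" by (auto simp: C_def)
  have onV: "onf V" using PV by (simp add: P_def)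
  have perp0: "x = 0" if x: "\<forall>v\<in>V. cinner v x = 0" for x
  proof (rule ccontr)
    assume "x \<noteq> 0"
    have Vinv: "cinner v (H *v z) = 0" if "v \<in> V" "cinner v z = 0" for v z
    proof -
      obtain l where l: "H *v v = complex_of_real l *s v" using PV \<open>v \<in> V\<close> by (auto simp: P_def)
      have "cinner v (H *v z) = cinner (H *v v) z" by (rule herm_cinner[OF herm])
      also have "\<dots> = 0" using that by (simp add: l cinner_scale_left)
      finally show ?thesis .
    qed
    from eigen_in_perp[OF herm Vinv x \<open>x \<noteq> 0\<close>]
    obtain u l where u: "\<forall>v\<in>V. cinner v u = 0" "cinner u u = 1" "H *v u = complex_of_real l *s u"
      by blast
    have uV: "u \<notin> V" using u by auto
    have u2: "\<forall>v\<in>V. cinner u v = 0" using u(1) by (metis cinner_commute complex_cnj_zero)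
    have "P (insert u V)"
      using PV u uV u2 unfolding P_def onf_def by auto
    hence "card (insert u V) \<in> C" by (auto simp: C_def)
    hence "card (insert u V) \<le> Max C" using finC by simp
    moreover have "card (insert u V) = Suc (card V)" using uV onV by (simp add: onf_def)
    ultimately show False using cV by simp
  qed
  have exp: "x = (\<Sum>v\<in>V. cinner v x *s v)" for x
  proof -
    have "\<forall>w\<in>V. cinner w (x - (\<Sum>v\<in>V. cinner v x *s v)) = 0"
      by (simp add: cinner_diff_right onf_cinner_expansion[OF onV])
    from perp0[OF this] show ?thesis by simp
  qed
  have "\<forall>v\<in>V. \<exists>l::real. H *v v = complex_of_real l *s v" using PV by (simp add: P_def)
  then obtain lam where "\<forall>v\<in>V. H *v v = complex_of_real (lam v) *s v" by metis
  thus ?thesis using onV exp by blast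
qed


lemma mv_expand:
  assumes "\<forall>x. x = (\<Sum>v\<in>V. cinner v x *s v)"
  shows "(A::complex^'n^'m) *v x = (\<Sum>v\<in>V. cinner v x *s (A *v v))"
proof -
  have "A *v x = A *v (\<Sum>v\<in>V. cinner v x *s v)" using assms by metis
  also have "\<dots> = (\<Sum>v\<in>V. cinner v x *s (A *v v))" by (simp add: mv_sum mv_scale)
  finally show ?thesis .
qed

lemma matrix_eq_on_basis:
  assumes "\<forall>x. x = (\<Sum>v\<in>V. cinner v x *s v)" "\<And>v. v \<in> V \<Longrightarrow> (A::complex^'n^'m) *v v = B *v v"
  shows "A = B"
proof -
  have "A *v x = B *v x" for x
    using mv_expand[OF assms(1), of A x] mv_expand[OF assms(1), of B x] assms(2)
    by (simp cong: sum.cong)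
  thus ?thesis by (simp add: matrix_eq)
qed

lemma psd_cinner: "psd S \<longleftrightarrow> adj S = S \<and> (\<forall>x. 0 \<le> Re (cinner x (S *v x)))"
  by (simp add: psd_def cinner_def)


lemma sqrt_eigen:
  fixes T H :: "complex^'n^'n"
  assumes T: "psd T" and TT: "T ** T = H" and v: "H *v v = complex_of_real l *s v"
  shows "T *v v = complex_of_real (sqrt l) *s v"
proof -
  have hT: "adj T = T" using T by (simp add: psd_cinner)
  from hermitian_eigenbasis[OF hT] obtain W mu where
    W: "onf W" and mu: "\<forall>w\<in>W. T *v w = complex_of_real (mu w) *s w"
    and ex: "\<forall>x. x = (\<Sum>w\<in>W. cinner w x *s w)" by blast
  have mupos: "mu w \<ge> 0" if "w \<in> W" for w
  proof -
    have "0 \<le> Re (cinner w (T *v w))" using T by (simp add: psd_cinner)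
    also have "cinner w (T *v w) = complex_of_real (mu w)"
      using mu that W by (simp add: cinner_scale_right onf_def)
    finally show ?thesis by simp
  qed
  define c where "c w = cinner w v" for w
  have Tv: "T *v v = (\<Sum>w\<in>W. (c w * complex_of_real (mu w)) *s w)"
  proof -
    have "T *v v = (\<Sum>w\<in>W. c w *s (T *v w))" using mv_expand[OF ex, of T v] by (simp add: c_def)
    also have "\<dots> = (\<Sum>w\<in>W. (c w * complex_of_real (mu w)) *s w)"
      by (rule sum.cong[OF refl]) (simp add: mu vector_smult_assoc)
    finally show ?thesis .
  qed
  have TTv: "T *v (T *v v) = (\<Sum>w\<in>W. (c w * complex_of_real (mu w) * complex_of_real (mu w)) *s w)"
  proof -
    have "T *v (T *v v) = (\<Sum>w\<in>W. (c w * complex_of_real (mu w)) *s (T *v w))"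
      unfolding Tv by (simp only: mv_sum mv_scale)
    also have "\<dots> = (\<Sum>w\<in>W. (c w * complex_of_real (mu w) * complex_of_real (mu w)) *s w)"
      by (rule sum.cong[OF refl]) (simp add: mu vector_smult_assoc)
    finally show ?thesis .
  qed
  have key: "c w = 0 \<or> mu w = sqrt l" if "w \<in> W" for w
  proof -
    have "T *v (T *v v) = H *v v" using TT by (simp add: matrix_vector_mul_assoc)
    hence "cinner w (T *v (T *v v)) = cinner w (complex_of_real l *s v)" using v by simp
    hence "c w * complex_of_real (mu w) * complex_of_real (mu w) = complex_of_real l * c w"
      unfolding TTv by (simp only: onf_cinner_expansion[OF W that] cinner_scale_right c_def)
    hence "c w * (complex_of_real (mu w * mu w) - complex_of_real l) = 0"
      by (simp add: algebra_simps)
    hence "c w = 0 \<or> mu w * mu w = l" by (metis eq_iff_diff_eq_0 mult_eq_0_iff of_real_eq_iff)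
    moreover have "mu w = sqrt l" if h: "mu w * mu w = l"
    proof -
      have "sqrt l = sqrt (mu w * mu w)" using h by simp
      also have "\<dots> = \<bar>mu w\<bar>" by (simp add: real_sqrt_mult_self)
      finally show ?thesis using mupos[OF \<open>w \<in> W\<close>] by simp
    qed
    ultimately show ?thesis by blast
  qed
  have "T *v v = (\<Sum>w\<in>W. (c w * complex_of_real (sqrt l)) *s w)"
    unfolding Tv
  proof (rule sum.cong[OF refl])
    fix w assume "w \<in> W"
    from key[OF this] show "(c w * complex_of_real (mu w)) *s w = (c w * complex_of_real (sqrt l)) *s w"
      by (elim disjE) simp_all
  qed
  also have "\<dots> = complex_of_real (sqrt l) *s (\<Sum>w\<in>W. c w *s w)"
    unfolding scale_sum vector_smult_assoc by (rule sum.cong[OF refl]) (simp only: mult.commute)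
  also have "(\<Sum>w\<in>W. c w *s w) = v" using spec[OF ex, of v] unfolding c_def by (rule sym)
  finally show ?thesis .
qed

lemma gram_hermitian: "adj (adj M ** M) = adj M ** M"
  by (simp add: adj_mult)

lemma gram_cinner: "cinner x ((adj M ** M) *v x) = complex_of_real ((norm (M *v x))\<^sup>2)"
proof -
  have "cinner x ((adj M ** M) *v x) = cinner x (adj M *v (M *v x))"
    by (simp add: matrix_vector_mul_assoc)
  also have "\<dots> = cinner (M *v x) (M *v x)" by (simp add: cinner_adj)
  finally show ?thesis by (simp add: cinner_self)
qed

lemma gram_sqrt:
  fixes M :: "complex^'n^'m"
  assumes V: "onf V" and lam: "\<forall>v\<in>V. (adj M ** M) *v v = complex_of_real (lam v) *s v"
    and ex: "\<forall>x. x = (\<Sum>v\<in>V. cinner v x *s v)"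
  shows "\<exists>!S. psd S \<and> S ** S = adj M ** M"
    and "\<And>v. v \<in> V \<Longrightarrow> lam v = (norm (M *v v))\<^sup>2"
proof -
  let ?H = "adj M ** M"
  show lamv: "lam v = (norm (M *v v))\<^sup>2" if "v \<in> V" for v
  proof -
    have "cinner v (?H *v v) = complex_of_real (lam v)"
      using lam that V by (simp add: cinner_scale_right onf_def)
    hence "complex_of_real ((norm (M *v v))\<^sup>2) = complex_of_real (lam v)" by (simp only: gram_cinner)
    thus ?thesis using of_real_eq_iff by metis
  qed
  define s where "s v = complex_of_real (sqrt (lam v))" for v
  define S0 :: "complex^'n^'n" where "S0 = (\<chi> i j. \<Sum>v\<in>V. s v * v$i * cnj (v$j))"
  have S0x: "S0 *v x = (\<Sum>v\<in>V. (s v * cinner v x) *s v)" for x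
    unfolding S0_def vec_eq_iff matrix_vector_mult_def cinner_def
    by (simp add: sum_component sum_distrib_left sum_distrib_right mult_ac sum.swap[of _ UNIV V])
  have S0v: "S0 *v u = s u *s u" if "u \<in> V" for u
  proof -
    have "S0 *v u = (\<Sum>v\<in>V. (if v = u then s v else 0) *s v)"
      unfolding S0x using V that by (intro sum.cong refl) (auto simp: onf_def)
    also have "\<dots> = s u *s u" using V that
      by (simp add: if_distrib[of "\<lambda>c. c *s _"] onf_def cong: if_cong)
    finally show ?thesis .
  qed
  have herm: "adj S0 = S0"
    unfolding S0_def adj_def vec_eq_iff by (simp add: s_def cnj_sum mult.commute mult.left_commute)
  have nn: "0 \<le> Re (cinner x (S0 *v x))" for x
  proof -
    have "cinner x (S0 *v x) = (\<Sum>v\<in>V. s v * cinner v x * cinner x v)"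
      by (simp add: S0x cinner_sum_right cinner_scale_right)
    also have "\<dots> = (\<Sum>v\<in>V. complex_of_real (sqrt (lam v) * (cmod (cinner v x))\<^sup>2))"
    proof (rule sum.cong[OF refl])
      fix v
      have "cinner v x * cinner x v = complex_of_real ((cmod (cinner v x))\<^sup>2)"
        using cnj_mult_self[of "cinner v x"] cinner_commute[of v x] by (simp add: mult.commute)
      thus "s v * cinner v x * cinner x v = complex_of_real (sqrt (lam v) * (cmod (cinner v x))\<^sup>2)"
        by (simp add: s_def mult.assoc)
    qed
    finally show ?thesis using lamv by (simp add: Re_sum sum_nonneg)
  qed
  have psd0: "psd S0" using herm nn by (simp add: psd_cinner)
  have sq0: "S0 ** S0 = ?H"
  proof (rule matrix_eq_on_basis[OF ex])
    fix v assume v: "v \<in> V"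
    have "(S0 ** S0) *v v = S0 *v (S0 *v v)" by (simp add: matrix_vector_mul_assoc)
    also have "\<dots> = (s v * s v) *s v" using S0v[OF v] by (simp add: mv_scale vector_smult_assoc)
    also have "s v * s v = complex_of_real (lam v)"
    proof -
      have "lam v \<ge> 0" using lamv[OF v] by simp
      hence "sqrt (lam v) * sqrt (lam v) = lam v" by simp
      thus ?thesis unfolding s_def of_real_mult[symmetric] by simp
    qed
    finally show "(S0 ** S0) *v v = ?H *v v" using lam v by simp
  qed
  show "\<exists>!S. psd S \<and> S ** S = ?H"
  proof (rule ex1I[of _ S0])
    show "psd S0 \<and> S0 ** S0 = ?H" using psd0 sq0 by simp
  next
    fix S assume S: "psd S \<and> S ** S = ?H"
    show "S = S0"
    proof (rule matrix_eq_on_basis[OF ex])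
      fix v assume v: "v \<in> V"
      show "S *v v = S0 *v v"
        using sqrt_eigen[of S ?H v "lam v"] S lam v S0v[OF v] by (simp add: s_def)
    qed
  qed
qed


lemma norm_sq_sum: "(norm (x::complex^'n))\<^sup>2 = (\<Sum>i\<in>UNIV. (cmod (x$i))\<^sup>2)"
  by (simp add: norm_vec_def L2_set_def sum_nonneg)

lemma onb_delta:
  fixes V :: "(complex^'n) set" and i j :: 'n
  assumes ex: "\<forall>x. x = (\<Sum>v\<in>V. cinner v x *s v)"
  shows "(\<Sum>v\<in>V. cnj (v$i) * v$j) = (if j = i then 1 else 0)"
proof -
  have "axis i (1::complex) = (\<Sum>v\<in>V. cinner v (axis i 1) *s v)" using ex by blast
  hence "axis i (1::complex) $ j = (\<Sum>v\<in>V. cinner v (axis i 1) *s v) $ j"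
    by (rule arg_cong)
  hence "axis i (1::complex) $ j = (\<Sum>v\<in>V. cinner v (axis i 1) * v$j)"
    by (simp only: sum_component vector_scalar_mult_def vec_lambda_beta)
  moreover have "cinner v (axis i 1) = cnj (v$i)" for v :: "complex^'n"
    unfolding cinner_def axis_def by (simp add: if_distrib if_distribR cong: if_cong)
  ultimately show ?thesis by (simp add: axis_def)
qed

lemma trace_onb:
  fixes T :: "complex^'n^'n"
  assumes V: "onf V" and ex: "\<forall>x. x = (\<Sum>v\<in>V. cinner v x *s v)"
  shows "trace T = (\<Sum>v\<in>V. cinner v (T *v v))"
proof -
  have "(\<Sum>v\<in>V. cinner v (T *v v)) = (\<Sum>v\<in>V. \<Sum>i\<in>UNIV. \<Sum>j\<in>UNIV. T$i$j * (cnj (v$i) * v$j))"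
    unfolding cinner_def matrix_vector_mult_def by (simp add: sum_distrib_left mult_ac)
  also have "\<dots> = (\<Sum>i\<in>UNIV. \<Sum>v\<in>V. \<Sum>j\<in>UNIV. T$i$j * (cnj (v$i) * v$j))"
    by (rule sum.swap)
  also have "\<dots> = (\<Sum>i\<in>UNIV. \<Sum>j\<in>UNIV. \<Sum>v\<in>V. T$i$j * (cnj (v$i) * v$j))"
    by (rule sum.cong[OF refl], rule sum.swap)
  also have "\<dots> = (\<Sum>i\<in>UNIV. \<Sum>j\<in>UNIV. T$i$j * (if j = i then 1 else 0))"
    by (simp add: sum_distrib_left[symmetric] onb_delta[OF ex])
  also have "\<dots> = (\<Sum>i\<in>UNIV. \<Sum>j\<in>UNIV. if i = j then T$i$i else 0)"
    by (intro sum.cong refl) auto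
  also have "\<dots> = trace T" by (simp add: trace_def)
  finally show ?thesis ..
qed

lemma parseval:
  assumes ex: "\<forall>x. x = (\<Sum>v\<in>V. cinner v x *s v)"
  shows "(norm x)\<^sup>2 = (\<Sum>v\<in>V. (cmod (cinner v x))\<^sup>2)"
proof -
  have xe: "x = (\<Sum>v\<in>V. cinner v x *s v)" using ex by blast
  have "cinner x x = cinner x (\<Sum>v\<in>V. cinner v x *s v)" using xe by simp
  also have "\<dots> = (\<Sum>v\<in>V. cinner v x * cinner x v)"
    by (simp add: cinner_sum_right cinner_scale_right)
  also have "\<dots> = (\<Sum>v\<in>V. complex_of_real ((cmod (cinner v x))\<^sup>2))"
  proof (rule sum.cong[OF refl])
    fix v show "cinner v x * cinner x v = complex_of_real ((cmod (cinner v x))\<^sup>2)"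
      using cnj_mult_self[of "cinner v x"] cinner_commute[of v x] by (simp add: mult.commute)
  qed
  finally have "complex_of_real ((norm x)\<^sup>2) = complex_of_real (\<Sum>v\<in>V. (cmod (cinner v x))\<^sup>2)"
    by (simp add: cinner_self)
  thus ?thesis using of_real_eq_iff by blast
qed

lemma bessel:
  assumes fin: "finite V"
    and orth: "\<And>a b. a \<in> V \<Longrightarrow> b \<in> V \<Longrightarrow> a \<noteq> b \<Longrightarrow> cinner (w a) (w b) = 0"
    and unit: "\<And>a. a \<in> V \<Longrightarrow> w a = 0 \<or> cinner (w a) (w a) = 1"
  shows "(\<Sum>a\<in>V. (cmod (cinner (w a) x))\<^sup>2) \<le> (norm x)\<^sup>2"
proof -
  define d where "d a = cinner (w a) x" for a
  define p where "p = (\<Sum>a\<in>V. d a *s w a)"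
  define N where "N = (\<Sum>a\<in>V. (cmod (d a))\<^sup>2)"
  have wp: "cinner (w b) p = d b" if b: "b \<in> V" for b
  proof -
    have "cinner (w b) p = (\<Sum>a\<in>V. d a * cinner (w b) (w a))"
      by (simp add: p_def cinner_sum_right cinner_scale_right)
    also have "\<dots> = (\<Sum>a\<in>V. if a = b then d b * cinner (w b) (w b) else 0)"
      by (rule sum.cong[OF refl]) (use orth b in auto)
    also have "\<dots> = d b * cinner (w b) (w b)" using fin b by simp
    also have "\<dots> = d b" using unit[OF b] by (auto simp: d_def)
    finally show ?thesis .
  qed
  have dd: "cnj (d a) * d a = complex_of_real ((cmod (d a))\<^sup>2)" for a by (rule cnj_mult_self)
  have pp: "cinner p p = complex_of_real N"
  proof -
    have "cinner p p = (\<Sum>a\<in>V. cnj (d a) * cinner (w a) p)"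
      by (simp add: p_def cinner_sum_left cinner_scale_left)
    also have "\<dots> = (\<Sum>a\<in>V. complex_of_real ((cmod (d a))\<^sup>2))"
      by (rule sum.cong[OF refl]) (simp add: wp dd)
    finally show ?thesis by (simp add: N_def)
  qed
  have px: "cinner p x = complex_of_real N"
  proof -
    have "cinner p x = (\<Sum>a\<in>V. cnj (d a) * d a)"
      by (simp add: p_def cinner_sum_left cinner_scale_left d_def)
    thus ?thesis by (simp add: dd N_def)
  qed
  have xp: "cinner x p = complex_of_real N" using px cinner_commute[of x p] by simp
  have "cinner (x - p) (x - p) = cinner x x - complex_of_real N"
    by (simp add: cinner_diff_left cinner_diff_right pp px xp)
  hence "(norm (x - p))\<^sup>2 = (norm x)\<^sup>2 - N"
    using Re_cinner_self[of "x - p"] Re_cinner_self[of x] by simp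
  hence "0 \<le> (norm x)\<^sup>2 - N" by (metis zero_le_power2)
  thus ?thesis by (simp add: N_def d_def)
qed


definition fro :: "complex^'a^'b \<Rightarrow> real" where
  "fro X = (\<Sum>i\<in>UNIV. \<Sum>j\<in>UNIV. (cmod (X$i$j))\<^sup>2)"

lemma fro_nonneg: "0 \<le> fro X" by (simp add: fro_def sum_nonneg)

lemma fro_trace: "Re (trace (adj X ** X)) = fro X"
proof -
  have "trace (adj X ** X) = (\<Sum>j\<in>UNIV. \<Sum>i\<in>UNIV. cnj (X$i$j) * X$i$j)"
    by (simp add: trace_def matrix_matrix_mult_def adj_def)
  also have "\<dots> = (\<Sum>j\<in>UNIV. \<Sum>i\<in>UNIV. complex_of_real ((cmod (X$i$j))\<^sup>2))"
    by (simp only: cnj_mult_self)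
  finally have "Re (trace (adj X ** X)) = (\<Sum>j\<in>UNIV. \<Sum>i\<in>UNIV. (cmod (X$i$j))\<^sup>2)"
    by (simp add: Re_sum)
  also have "\<dots> = fro X" unfolding fro_def by (rule sum.swap)
  finally show ?thesis .
qed

lemma cmod_cinner_commute: "cmod (cinner x y) = cmod (cinner y x)"
  using cinner_commute[of x y] by simp

lemma sum_norm_Bv:
  fixes B :: "complex^'k^'m"
  assumes ex: "\<forall>x. x = (\<Sum>v\<in>V. cinner v x *s v)"
  shows "(\<Sum>v\<in>V. (norm (B *v v))\<^sup>2) = fro B"
proof -
  define r where "r i = (\<chi> j. cnj (B$i$j))" for i
  have Bv: "(B *v v)$i = cinner (r i) v" for v i
    by (simp add: r_def cinner_def matrix_vector_mult_def)
  have "(\<Sum>v\<in>V. (norm (B *v v))\<^sup>2) = (\<Sum>v\<in>V. \<Sum>i\<in>UNIV. (cmod (cinner v (r i)))\<^sup>2)"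
    by (simp add: norm_sq_sum Bv cmod_cinner_commute)
  also have "\<dots> = (\<Sum>i\<in>UNIV. \<Sum>v\<in>V. (cmod (cinner v (r i)))\<^sup>2)" by (rule sum.swap)
  also have "\<dots> = (\<Sum>i\<in>UNIV. (norm (r i))\<^sup>2)" by (simp add: parseval[OF ex])
  also have "\<dots> = fro B" by (simp add: norm_sq_sum r_def fro_def)
  finally show ?thesis .
qed

lemma sum_norm_adjA:
  fixes A :: "complex^'k^'p" and w :: "'v \<Rightarrow> complex^'p"
  assumes fin: "finite V"
    and orth: "\<And>a b. a \<in> V \<Longrightarrow> b \<in> V \<Longrightarrow> a \<noteq> b \<Longrightarrow> cinner (w a) (w b) = 0"
    and unit: "\<And>a. a \<in> V \<Longrightarrow> w a = 0 \<or> cinner (w a) (w a) = 1"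
  shows "(\<Sum>v\<in>V. (norm (adj A *v w v))\<^sup>2) \<le> fro A"
proof -
  define c where "c k = (\<chi> i. A$i$k)" for k
  have Aw: "(adj A *v x)$k = cinner (c k) x" for x k
    by (simp add: c_def cinner_def matrix_vector_mult_def adj_def)
  have "(\<Sum>v\<in>V. (norm (adj A *v w v))\<^sup>2) = (\<Sum>v\<in>V. \<Sum>k\<in>UNIV. (cmod (cinner (w v) (c k)))\<^sup>2)"
    by (simp add: norm_sq_sum Aw cmod_cinner_commute)
  also have "\<dots> = (\<Sum>k\<in>UNIV. \<Sum>v\<in>V. (cmod (cinner (w v) (c k)))\<^sup>2)" by (rule sum.swap)
  also have "\<dots> \<le> (\<Sum>k\<in>UNIV. (norm (c k))\<^sup>2)"
    by (rule sum_mono) (rule bessel[OF fin orth unit])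
  also have "\<dots> = (\<Sum>k\<in>UNIV. \<Sum>i\<in>UNIV. (cmod (A$i$k))\<^sup>2)" by (simp add: norm_sq_sum c_def)
  also have "\<dots> = fro A" unfolding fro_def by (rule sum.swap)
  finally show ?thesis .
qed

lemma sum_cs_sqrt:
  fixes a b :: "'v \<Rightarrow> real"
  shows "(\<Sum>i\<in>I. a i * b i) \<le> sqrt (\<Sum>i\<in>I. (a i)\<^sup>2) * sqrt (\<Sum>i\<in>I. (b i)\<^sup>2)"
proof -
  have "(\<Sum>i\<in>I. a i * b i) \<le> \<bar>\<Sum>i\<in>I. a i * b i\<bar>" by simp
  also have "\<dots> = sqrt ((\<Sum>i\<in>I. a i * b i)\<^sup>2)" by simp
  also have "\<dots> \<le> sqrt ((\<Sum>i\<in>I. (a i)\<^sup>2) * (\<Sum>i\<in>I. (b i)\<^sup>2))"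
    by (rule real_sqrt_le_mono) (rule Cauchy_Schwarz_ineq_sum)
  also have "\<dots> = sqrt (\<Sum>i\<in>I. (a i)\<^sup>2) * sqrt (\<Sum>i\<in>I. (b i)\<^sup>2)" by (rule real_sqrt_mult)
  finally show ?thesis .
qed


lemma nuc_bound:
  fixes A :: "complex^'k^'p" and B :: "complex^'k^'k"
  shows "nuclear_norm (A ** B) \<le> sqrt (fro A) * sqrt (fro B)"
proof -
  define M where "M = A ** B"
  define H where "H = adj M ** M"
  have hH: "adj H = H" unfolding H_def by (rule gram_hermitian)
  from hermitian_eigenbasis[OF hH] obtain V lam where
    V: "onf V" and lam: "\<forall>v\<in>V. H *v v = complex_of_real (lam v) *s v"
    and ex: "\<forall>x. x = (\<Sum>v\<in>V. cinner v x *s v)" by blast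
  have uniq: "\<exists>!S. psd S \<and> S ** S = H"
    using gram_sqrt(1)[OF V lam[unfolded H_def] ex] unfolding H_def .
  have lamv: "lam v = (norm (M *v v))\<^sup>2" if "v \<in> V" for v
    using gram_sqrt(2)[OF V lam[unfolded H_def] ex that] .
  define S where "S = (THE S. psd S \<and> S ** S = H)"
  have S: "psd S \<and> S ** S = H" unfolding S_def by (rule theI'[OF uniq])
  have Sv: "S *v v = complex_of_real (norm (M *v v)) *s v" if v: "v \<in> V" for v
  proof -
    have "S *v v = complex_of_real (sqrt (lam v)) *s v"
      using sqrt_eigen[of S H v "lam v"] S lam v by blast
    thus ?thesis using lamv[OF v] by simp
  qed
  have nn: "nuclear_norm M = (\<Sum>v\<in>V. norm (M *v v))"
  proof -
    have "nuclear_norm M = Re (trace S)" by (simp add: nuclear_norm_def S_def H_def)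
    also have "trace S = (\<Sum>v\<in>V. cinner v (S *v v))" by (rule trace_onb[OF V ex])
    also have "\<dots> = (\<Sum>v\<in>V. complex_of_real (norm (M *v v)))"
      by (rule sum.cong[OF refl]) (use V in \<open>simp add: Sv cinner_scale_right onf_def\<close>)
    finally show ?thesis by (simp add: Re_sum)
  qed
  define w where "w v = complex_of_real (1 / norm (M *v v)) *s (M *v v)" for v
  have MM: "cinner (M *v u) (M *v v) = complex_of_real (lam v) * cinner u v" if "v \<in> V" for u v
  proof -
    have "cinner (M *v u) (M *v v) = cinner u (adj M *v (M *v v))"
      using cinner_adj[of u "adj M" "M *v v"] by simp
    also have "\<dots> = cinner u (H *v v)" by (simp add: H_def matrix_vector_mul_assoc)
    also have "\<dots> = complex_of_real (lam v) * cinner u v" using lam that by (simp add: cinner_scale_right)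
    finally show ?thesis .
  qed
  have worth: "cinner (w a) (w b) = 0" if "a \<in> V" "b \<in> V" "a \<noteq> b" for a b
    using that V MM[of b a] by (simp add: w_def cinner_scale_left cinner_scale_right onf_def)
  have wunit: "w a = 0 \<or> cinner (w a) (w a) = 1" if "a \<in> V" for a
  proof (cases "M *v a = 0")
    case True thus ?thesis by (simp add: w_def)
  next
    case False
    define n where "n = norm (M *v a)"
    have "cinner (w a) (w a) = complex_of_real (1 / n) * (cnj (complex_of_real (1 / n)) * cinner (M *v a) (M *v a))"
      by (simp only: w_def n_def cinner_scale_left cinner_scale_right)
    also have "\<dots> = complex_of_real (1 / n * (1 / n * n\<^sup>2))"
      by (simp add: cinner_self n_def)
    also have "\<dots> = 1" using False by (simp add: power2_eq_square n_def)
    finally show ?thesis by simp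
  qed
  have pt: "norm (M *v v) \<le> norm (adj A *v w v) * norm (B *v v)" for v
  proof (cases "M *v v = 0")
    case True thus ?thesis by simp
  next
    case False
    have "cinner (w v) (M *v v) = complex_of_real (1 / norm (M *v v) * (norm (M *v v))\<^sup>2)"
      by (simp add: w_def cinner_scale_left cinner_self)
    also have "\<dots> = complex_of_real (norm (M *v v))" using False by (simp add: power2_eq_square)
    finally have e1: "cinner (w v) (M *v v) = complex_of_real (norm (M *v v))" .
    have "cinner (w v) (M *v v) = cinner (w v) (A *v (B *v v))"
      by (simp add: M_def matrix_vector_mul_assoc)
    also have "\<dots> = cinner (adj A *v w v) (B *v v)" by (rule cinner_adj)
    finally have "complex_of_real (norm (M *v v)) = cinner (adj A *v w v) (B *v v)"
      using e1 by simp
    hence "norm (M *v v) = inner (adj A *v w v) (B *v v)"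
      unfolding inner_cinner by (metis Re_complex_of_real)
    also have "\<dots> \<le> norm (adj A *v w v) * norm (B *v v)" by (rule norm_cauchy_schwarz)
    finally show ?thesis .
  qed
  have "nuclear_norm M \<le> (\<Sum>v\<in>V. norm (adj A *v w v) * norm (B *v v))"
    unfolding nn by (rule sum_mono) (rule pt)
  also have "\<dots> \<le> sqrt (\<Sum>v\<in>V. (norm (adj A *v w v))\<^sup>2) * sqrt (\<Sum>v\<in>V. (norm (B *v v))\<^sup>2)"
    by (rule sum_cs_sqrt)
  also have "\<dots> = sqrt (\<Sum>v\<in>V. (norm (adj A *v w v))\<^sup>2) * sqrt (fro B)"
    by (simp only: sum_norm_Bv[OF ex])
  also have "\<dots> \<le> sqrt (fro A) * sqrt (fro B)"
  proof (rule mult_right_mono)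
    show "sqrt (\<Sum>v\<in>V. (norm (adj A *v w v))\<^sup>2) \<le> sqrt (fro A)"
      using sum_norm_adjA[of V w A] V worth wunit by (simp add: onf_def)
    show "0 \<le> sqrt (fro B)" by (simp add: fro_nonneg)
  qed
  finally show ?thesis by (simp add: M_def)
qed


lemma meas_sqrt_fro:
  fixes X :: "real \<Rightarrow> complex^'k^'p" and Y :: "real \<Rightarrow> complex^'m^'k"
  assumes X: "X \<in> borel_measurable lborel" and Y: "Y \<in> borel_measurable lborel"
  shows "(\<lambda>\<omega>. sqrt (fro (X \<omega> ** Y \<omega>))) \<in> borel_measurable lborel"
proof -
  have XY: "(\<lambda>\<omega>. (X \<omega>, Y \<omega>)) \<in> borel_measurable lborel"
    using X Y by (intro borel_measurable_Pair) auto
  have c: "continuous_on UNIV (\<lambda>p::(complex^'k^'p) \<times> (complex^'m^'k). sqrt (fro (fst p ** snd p)))"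
    unfolding fro_def matrix_matrix_mult_def
    by (simp, intro continuous_intros)
  from borel_measurable_continuous_on[OF c XY] show ?thesis by simp
qed

lemma h2sq_fro: "h2sq X = ennreal (1 / (2 * pi)) *
     (\<integral>\<^sup>+ \<omega>. ennreal (fro (X \<omega>)) * indicator {-pi..pi} \<omega> \<partial>lborel)"
  by (simp add: h2sq_def fro_trace)

lemma ennreal_sqrt_sq: "0 \<le> x \<Longrightarrow> (ennreal (sqrt x))\<^sup>2 = ennreal x"
  by (subst ennreal_power) simp_all

theorem theorem8:
  fixes F :: "real \<Rightarrow> complex^'m^'p"
    and G L :: "real \<Rightarrow> complex^'m^'m"
    and k :: "real^'m"
    and \<epsilon> \<delta> :: real
  assumes F_meas: "F \<in> borel_measurable lborel"
    and F_fin: "h2sq F < \<infinity>"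
    and k_pos: "\<forall>i. k $ i > 0"
    and eps: "\<epsilon> > 0" and del: "\<delta> > 0"
    and G_meas: "G \<in> borel_measurable lborel"
    and G_stable: "bounded (G ` {-pi..pi})"
    and L_meas: "L \<in> borel_measurable lborel"
    and LG: "AE \<omega> in lborel. \<omega> \<in> {-pi..pi} \<longrightarrow> L \<omega> ** G \<omega> = mat 1"
  shows "ennreal ((kappa \<delta> \<epsilon>)\<^sup>2) * h2sq (\<lambda>\<omega>. G \<omega> ** diagm k) * h2sq (\<lambda>\<omega>. F \<omega> ** L \<omega>)
     \<ge> ennreal ((kappa \<delta> \<epsilon>)\<^sup>2) *
        (ennreal (1 / (2 * pi)) * (\<integral>\<^sup>+ \<omega>\<in>{-pi..pi}. ennreal (nuclear_norm (F \<omega> ** diagm k)) \<partial>lborel))\<^sup>2"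
proof -
  define I where "I = {-pi..pi}"
  define c where "c = ennreal (1 / (2 * pi))"
  define f where "f \<omega> = ennreal (sqrt (fro (F \<omega> ** L \<omega>))) * indicator I \<omega>" for \<omega>
  define g where "g \<omega> = ennreal (sqrt (fro (G \<omega> ** diagm k))) * indicator I \<omega>" for \<omega>
  define N where "N = (\<integral>\<^sup>+ \<omega>. ennreal (nuclear_norm (F \<omega> ** diagm k)) * indicator I \<omega> \<partial>lborel)"
  define PF where "PF = (\<integral>\<^sup>+ \<omega>. ennreal (fro (F \<omega> ** L \<omega>)) * indicator I \<omega> \<partial>lborel)"
  define PG where "PG = (\<integral>\<^sup>+ \<omega>. ennreal (fro (G \<omega> ** diagm k)) * indicator I \<omega> \<partial>lborel)"
  have Kmeas: "(\<lambda>\<omega>::real. diagm k) \<in> borel_measurable lborel" by simp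
  have fm: "f \<in> borel_measurable lborel" unfolding f_def I_def
    using meas_sqrt_fro[OF F_meas L_meas] by measurable
  have gm: "g \<in> borel_measurable lborel" unfolding g_def I_def
    using meas_sqrt_fro[OF G_meas Kmeas] by measurable
  have pt: "ennreal (nuclear_norm (F \<omega> ** diagm k)) * indicator I \<omega> \<le> f \<omega> * g \<omega>"
    if h: "\<omega> \<in> I \<longrightarrow> L \<omega> ** G \<omega> = mat 1" for \<omega>
  proof (cases "\<omega> \<in> I")
    case False thus ?thesis by simp
  next
    case True
    hence LG1: "L \<omega> ** G \<omega> = mat 1" using h by simp
    have "F \<omega> ** diagm k = F \<omega> ** (L \<omega> ** G \<omega>) ** diagm k" using LG1 by simp
    also have "\<dots> = (F \<omega> ** L \<omega>) ** (G \<omega> ** diagm k)" by (simp add: matrix_mul_assoc)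
    finally have "nuclear_norm (F \<omega> ** diagm k)
        \<le> sqrt (fro (F \<omega> ** L \<omega>)) * sqrt (fro (G \<omega> ** diagm k))"
      using nuc_bound[of "F \<omega> ** L \<omega>" "G \<omega> ** diagm k"] by simp
    hence "ennreal (nuclear_norm (F \<omega> ** diagm k))
        \<le> ennreal (sqrt (fro (F \<omega> ** L \<omega>)) * sqrt (fro (G \<omega> ** diagm k)))"
      by (rule ennreal_leI)
    also have "\<dots> = ennreal (sqrt (fro (F \<omega> ** L \<omega>))) * ennreal (sqrt (fro (G \<omega> ** diagm k)))"
      by (rule ennreal_mult) (simp_all add: fro_nonneg)
    finally have "ennreal (nuclear_norm (F \<omega> ** diagm k))
        \<le> ennreal (sqrt (fro (F \<omega> ** L \<omega>))) * ennreal (sqrt (fro (G \<omega> ** diagm k)))" .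
    thus ?thesis using True by (simp add: f_def g_def)
  qed
  have "N \<le> (\<integral>\<^sup>+ \<omega>. f \<omega> * g \<omega> \<partial>lborel)"
    unfolding N_def by (rule nn_integral_mono_AE) (use LG pt I_def in auto)
  hence "N\<^sup>2 \<le> (\<integral>\<^sup>+ \<omega>. f \<omega> * g \<omega> \<partial>lborel)\<^sup>2" by (simp add: power_mono)
  also have "\<dots> \<le> (\<integral>\<^sup>+ \<omega>. f \<omega> ^ 2 \<partial>lborel) * (\<integral>\<^sup>+ \<omega>. g \<omega> ^ 2 \<partial>lborel)"
    by (rule Cauchy_Schwarz_nn_integral[OF fm gm])
  also have "(\<integral>\<^sup>+ \<omega>. f \<omega> ^ 2 \<partial>lborel) = PF"
    unfolding PF_def f_def
    by (rule nn_integral_cong) (auto simp: indicator_def ennreal_sqrt_sq fro_nonneg)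
  also have "(\<integral>\<^sup>+ \<omega>. g \<omega> ^ 2 \<partial>lborel) = PG"
    unfolding PG_def g_def
    by (rule nn_integral_cong) (auto simp: indicator_def ennreal_sqrt_sq fro_nonneg)
  finally have NP: "N\<^sup>2 \<le> PF * PG" .
  have "(c * N)\<^sup>2 = c\<^sup>2 * N\<^sup>2" by (simp add: power_mult_distrib)
  also have "\<dots> \<le> c\<^sup>2 * (PF * PG)" by (rule mult_left_mono[OF NP]) simp
  also have "\<dots> = (c * PG) * (c * PF)" by (simp add: power2_eq_square mult_ac)
  finally have main: "(c * N)\<^sup>2 \<le> (c * PG) * (c * PF)" .
  have "ennreal ((kappa \<delta> \<epsilon>)\<^sup>2) * (c * N)\<^sup>2 \<le> ennreal ((kappa \<delta> \<epsilon>)\<^sup>2) * ((c * PG) * (c * PF))"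
    by (rule mult_left_mono[OF main]) simp
  thus ?thesis
    by (simp add: h2sq_fro c_def N_def PF_def PG_def I_def mult.assoc)
qed


end
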